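(* Consider $n$ agents over a fixed undirected connected graph with symmetric nonnegative weights $a_{ij}$ and Laplacian $L$ with largest eigenvalue $\lambda_n$, and let $0<h<2/\lambda_n$. The states $x_i(t)\in\mathbb{R}^m$ evolve by $x_i(t+1)=x_i(t)+u_i(t)$ with $$y_i(t)=x_i(t)+h\sum_{j\in N_i}a_{ij}(x_j(t)-x_i(t)),\ \nabla_i(t)=\beta(t)\nabla g_i^+(y_i(t)),\ \xi_i(t)=y_i(t)-\nabla_i(t),$$ $$\varphi_i(t)=\alpha(t)\big(\xi_i(t)-P_{X_i}(\xi_i(t))\big),\ \phi_i(t)=-\nabla_i(t)-\varphi_i(t),\ u_i(t)=h\sum_{j\in N_i}a_{ij}(x_j(t)-x_i(t))+\phi_i(t),$$ for given real sequences $\alpha(t),\beta(t)$. If $\lim_{t\to\infty}\phi_i(t)=0$ for every $i$, then the agents reach consensus asymptotically, i.e. $\lim_{t\to\infty}\|x_i(t)-x_j(t)\|=0$ for all $i,j$.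
   Context: $g_i:\mathbb{R}^m\to\mathbb{R}$ convex continuous, $X_i\subset\mathbb{R}^m$ closed convex, $g_i^+=\max[g_i,0]$, $\nabla g_i^+(y)$ a subgradient of $g_i^+$ at $y$, $P_{X_i}$ Euclidean projection onto $X_i$. Laplacian $L=(l_{ij})$: $l_{ij}=-a_{ij}$ for $i\neq j$, $l_{ii}=\sum_j a_{ij}$. *)

theory Defs
  imports "HOL-Analysis.Analysis"
begin

text \<open>Agents are indexed by a finite type 'n (n = CARD('n)); states live in a
Euclidean space 'a (playing the role of R^m).\<close>

definition neighbors :: "('n \<Rightarrow> 'n \<Rightarrow> real) \<Rightarrow> 'n \<Rightarrow> 'n set" where
  "neighbors a i = {j. j \<noteq> i \<and> a i j > 0}"

definition laplacian :: "('n::finite \<Rightarrow> 'n \<Rightarrow> real) \<Rightarrow> real^'n^'n" where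
  "laplacian a = (\<chi> i j. if i = j then (\<Sum>k\<in>UNIV. a i k) else - a i j)"

definition is_eigenvalue :: "real^'n^'n \<Rightarrow> real \<Rightarrow> bool" where
  "is_eigenvalue M c \<longleftrightarrow> (\<exists>v. v \<noteq> 0 \<and> M *v v = c *\<^sub>R v)"

definition largest_eigenvalue :: "real^'n^'n \<Rightarrow> real" where
  "largest_eigenvalue M = Max {c. is_eigenvalue M c}"

definition connected_graph :: "('n \<Rightarrow> 'n \<Rightarrow> real) \<Rightarrow> bool" where
  "connected_graph a \<longleftrightarrow> (\<forall>i j. (i, j) \<in> {(p, q). a p q > 0}\<^sup>*)"

definition pos_part :: "('a \<Rightarrow> real) \<Rightarrow> 'a \<Rightarrow> real" where
  "pos_part g y = max (g y) 0"

definition is_subgradient :: "('a::real_inner \<Rightarrow> real) \<Rightarrow> 'a \<Rightarrow> 'a \<Rightarrow> bool" where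
  "is_subgradient f y d \<longleftrightarrow> (\<forall>z. f z \<ge> f y + d \<bullet> (z - y))"

end

theory Submission
  imports Defs
begin


lemma sym_dot:
  fixes M :: "real^'n::finite^'n"
  assumes "transpose M = M"
  shows "u \<bullet> (M *v w) = (M *v u) \<bullet> w"
  by (metis assms dot_lmul_matrix transpose_matrix_vector)

lemma psd_zero:
  fixes N :: "real^'n::finite^'n"
  assumes sN: "transpose N = N" and psd: "\<And>v. 0 \<le> v \<bullet> (N *v v)" and z: "v0 \<bullet> (N *v v0) = 0"
  shows "N *v v0 = 0"
proof -
  define w where "w = N *v v0"
  have key: "0 \<le> 2 * t * (w \<bullet> w) + t^2 * (w \<bullet> (N *v w))" for t
  proof -
    have "0 \<le> (v0 + t *\<^sub>R w) \<bullet> (N *v (v0 + t *\<^sub>R w))" by (rule psd)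
    also have "\<dots> = v0 \<bullet> (N *v v0) + t * (w \<bullet> (N *v v0)) + t * (v0 \<bullet> (N *v w)) + t^2 * (w \<bullet> (N *v w))"
      by (simp add: matrix_vector_right_distrib matrix_vector_mult_scaleR inner_add_left inner_add_right algebra_simps power2_eq_square)
    also have "v0 \<bullet> (N *v w) = w \<bullet> (N *v v0)"
      using sym_dot[OF sN] by (simp add: inner_commute)
    finally show ?thesis using z by (simp add: w_def)
  qed
  define A where "A = w \<bullet> w"
  define B where "B = w \<bullet> (N *v w)"
  have B0: "0 \<le> B" using psd B_def by simp
  define D where "D = B + 1"
  have Dp: "D > 0" using B0 D_def by simp
  have eq: "2 * (- A / D) * A + (- A / D)^2 * B = (A^2 * (B - 2*D)) / D^2"
    using Dp by (simp add: field_simps power2_eq_square)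
  have "0 \<le> (A^2 * (B - 2*D)) / D^2" using key[of "- A/D"] A_def B_def eq by simp
  hence "0 \<le> A^2 * (B - 2*D)" using Dp by (simp add: zero_le_divide_iff)
  hence "A^2 * (B + 2) \<le> 0" using D_def by (simp add: algebra_simps)
  hence "A^2 \<le> 0" using B0 by (simp add: mult_le_0_iff)
  hence "A = 0" by simp
  thus ?thesis by (simp add: A_def w_def)
qed

lemma eig_finite:
  fixes M :: "real^'n::finite^'n"
  assumes sM: "transpose M = M"
  shows "finite {c. is_eigenvalue M c}"
proof -
  define E where "E = {c. is_eigenvalue M c}"
  define f where "f c = (SOME v. v \<noteq> 0 \<and> M *v v = c *\<^sub>R v)" for c
  have fE: "f c \<noteq> 0 \<and> M *v f c = c *\<^sub>R f c" if "c \<in> E" for c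
    using that unfolding E_def is_eigenvalue_def f_def by (metis (mono_tags, lifting) mem_Collect_eq someI_ex)
  have inj: "inj_on f E"
  proof (rule inj_onI)
    fix c d assume "c \<in> E" "d \<in> E" "f c = f d"
    then have "c *\<^sub>R f c = d *\<^sub>R f c" "f c \<noteq> 0" using fE by metis+
    then show "c = d" by simp
  qed
  have orth: "pairwise orthogonal (f ` E)"
    unfolding pairwise_def
  proof (intro ballI impI)
    fix x y assume "x \<in> f ` E" "y \<in> f ` E" "x \<noteq> y"
    then obtain c d where cd: "c \<in> E" "d \<in> E" "x = f c" "y = f d" by auto
    with \<open>x \<noteq> y\<close> have "c \<noteq> d" by auto
    have "c * (x \<bullet> y) = (M *v x) \<bullet> y" using fE cd by simp
    also have "\<dots> = x \<bullet> (M *v y)" using sym_dot[OF sM] by simp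
    also have "\<dots> = d * (x \<bullet> y)" using fE cd by simp
    finally have "x \<bullet> y = 0" using \<open>c \<noteq> d\<close> by simp
    thus "orthogonal x y" by (simp add: orthogonal_def)
  qed
  have "0 \<notin> f ` E" using fE by auto
  hence "independent (f ` E)" using orth pairwise_orthogonal_independent by blast
  hence "finite (f ` E)" by (rule independent_imp_finite)
  thus ?thesis using inj finite_imageD E_def by blast
qed

lemma rayleigh:
  fixes M :: "real^'n::finite^'n"
  assumes sM: "transpose M = M"
  shows "v \<bullet> (M *v v) \<le> largest_eigenvalue M * (v \<bullet> v)"
proof -
  let ?q = "\<lambda>v::real^'n. v \<bullet> (M *v v)"
  have cont: "continuous_on (sphere 0 1) ?q"
    by (intro continuous_intros linear_continuous_on) (simp add: linear_conv_bounded_linear[symmetric])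
  obtain e :: "real^'n" where "norm e = 1" using vector_choose_size[of 1] by auto
  hence ne: "sphere 0 1 \<noteq> ({}::(real^'n) set)" by auto
  obtain v0 where v0: "v0 \<in> sphere 0 1" and mx: "\<And>v. v \<in> sphere 0 1 \<Longrightarrow> ?q v \<le> ?q v0"
    using continuous_attains_sup[OF compact_sphere ne cont] by blast
  define m where "m = ?q v0"
  have n1: "v0 \<bullet> v0 = 1" using v0 by (simp add: dot_square_norm)
  have bnd: "?q v \<le> m * (v \<bullet> v)" for v
  proof (cases "v = 0")
    case True thus ?thesis by simp
  next
    case False
    define w where "w = (1 / norm v) *\<^sub>R v"
    have "w \<in> sphere 0 1" using False by (simp add: w_def)
    hence "?q w \<le> m" using mx m_def by blast
    moreover have "?q w = ?q v / (norm v)^2"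
      by (simp add: w_def matrix_vector_mult_scaleR power2_eq_square)
    moreover have "v \<bullet> v = (norm v)^2" by (simp add: dot_square_norm)
    ultimately show ?thesis using False by (simp add: divide_le_eq)
  qed
  define N where "N = m *\<^sub>R mat 1 - M"
  have Nv: "N *v v = m *\<^sub>R v - M *v v" for v
    by (simp add: N_def matrix_vector_mult_diff_rdistrib scaleR_matrix_vector_assoc[symmetric])
  have sN: "transpose N = N" using sM by (simp add: N_def transpose_def vec_eq_iff mat_def)
  have psd: "0 \<le> v \<bullet> (N *v v)" for v using bnd[of v] by (simp add: Nv inner_diff_right)
  have z: "v0 \<bullet> (N *v v0) = 0" using n1 by (simp add: Nv inner_diff_right m_def)
  have "N *v v0 = 0" by (rule psd_zero[OF sN psd z])
  hence "M *v v0 = m *\<^sub>R v0" by (simp add: Nv)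
  moreover have "v0 \<noteq> 0" using v0 by auto
  ultimately have "is_eigenvalue M m" unfolding is_eigenvalue_def by blast
  hence "m \<le> largest_eigenvalue M"
    unfolding largest_eigenvalue_def using eig_finite[OF sM] by (simp add: Max_ge)
  moreover have "0 \<le> v \<bullet> v" by simp
  ultimately show ?thesis using bnd[of v] by (meson mult_right_mono order_trans)
qed

definition Lm :: "('n::finite \<Rightarrow> 'n \<Rightarrow> real) \<Rightarrow> real^'n^'n" where
  "Lm a = (\<chi> i j. (if i = j then (\<Sum>k\<in>UNIV. a i k) else 0) - a i j)"

lemma Lm_apply: "(Lm a *v v) $ i = (\<Sum>j\<in>UNIV. a i j * (v$i - v$j))"
proof -
  have "(Lm a *v v)$i = (\<Sum>j\<in>UNIV. (if i = j then (\<Sum>k\<in>UNIV. a i k) else 0) * v$j) - (\<Sum>j\<in>UNIV. a i j * v$j)"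
    by (simp add: Lm_def matrix_vector_mult_def left_diff_distrib sum_subtractf)
  also have "(\<Sum>j\<in>UNIV. (if i = j then (\<Sum>k\<in>UNIV. a i k) else 0) * v$j) = (\<Sum>j\<in>UNIV. if i = j then (\<Sum>k\<in>UNIV. a i k) * v$j else 0)"
    by (rule sum.cong) auto
  also have "\<dots> = (\<Sum>k\<in>UNIV. a i k) * v$i" by simp
  finally show ?thesis by (simp add: right_diff_distrib sum_subtractf sum_distrib_right)
qed

lemma Lm_sym: "(\<And>i j. a i j = a j i) \<Longrightarrow> transpose (Lm a) = Lm a"
  by (auto simp add: Lm_def transpose_def vec_eq_iff)

lemma lap_Lm: "laplacian a *v v = Lm a *v v + (\<chi> i. a i i * v$i)"
proof -
  have "laplacian a = Lm a + (\<chi> i j. if i = j then a i i else 0)"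
    by (simp add: laplacian_def Lm_def vec_eq_iff)
  moreover have "(\<chi> i j. if i = j then a i i else 0) *v v = (\<chi> i. a i i * v$i)"
  proof -
    have "(\<Sum>j\<in>UNIV. (if i = j then a i i else 0) * v$j) = a i i * v$i" for i
    proof -
      have "(\<Sum>j\<in>UNIV. (if i = j then a i i else 0) * v$j) = (\<Sum>j\<in>UNIV. if i = j then a i i * v$j else 0)"
        by (rule sum.cong) auto
      thus ?thesis by simp
    qed
    thus ?thesis by (simp add: matrix_vector_mult_def vec_eq_iff)
  qed
  ultimately show ?thesis by (simp add: matrix_vector_mult_add_rdistrib)
qed

lemma quad:
  assumes sym: "\<And>i j. a i j = a j i"
  shows "2 * (v \<bullet> (Lm a *v v)) = (\<Sum>i\<in>UNIV. \<Sum>j\<in>UNIV. a i j * (v$i - v$j)^2)"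
proof -
  have S: "v \<bullet> (Lm a *v v) = (\<Sum>i\<in>UNIV. \<Sum>j\<in>UNIV. a i j * (v$i * (v$i - v$j)))"
    by (simp add: inner_vec_def Lm_apply sum_distrib_left mult.left_commute)
  also have "\<dots> = (\<Sum>j\<in>UNIV. \<Sum>i\<in>UNIV. a i j * (v$i * (v$i - v$j)))" by (rule sum.swap)
  also have "\<dots> = (\<Sum>i\<in>UNIV. \<Sum>j\<in>UNIV. a i j * (v$j * (v$j - v$i)))" using sym by simp
  finally have S2: "v \<bullet> (Lm a *v v) = \<dots>" .
  have "2 * (v \<bullet> (Lm a *v v)) = (\<Sum>i\<in>UNIV. \<Sum>j\<in>UNIV. a i j * (v$i * (v$i - v$j))) + (\<Sum>i\<in>UNIV. \<Sum>j\<in>UNIV. a i j * (v$j * (v$j - v$i)))"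
    using S S2 by simp
  also have "\<dots> = (\<Sum>i\<in>UNIV. \<Sum>j\<in>UNIV. a i j * (v$i - v$j)^2)"
    by (simp add: sum.distrib[symmetric] algebra_simps power2_eq_square)
  finally show ?thesis .
qed

lemma quad_nonneg:
  assumes sym: "\<And>i j. a i j = a j i" and nonneg: "\<And>i j. a i j \<ge> 0"
  shows "0 \<le> v \<bullet> (Lm a *v v)"
proof -
  have "0 \<le> (\<Sum>i\<in>UNIV. \<Sum>j\<in>UNIV. a i j * (v$i - v$j)^2)"
    by (intro sum_nonneg mult_nonneg_nonneg nonneg) simp
  thus ?thesis using quad[where a=a and v=v, OF sym] by simp
qed

lemma Lm_le_lap:
  assumes nonneg: "\<And>i j. a i j \<ge> 0"
  shows "v \<bullet> (Lm a *v v) \<le> v \<bullet> (laplacian a *v v)"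
proof -
  have "0 \<le> v \<bullet> (\<chi> i. a i i * v$i)"
    unfolding inner_vec_def by (intro sum_nonneg) (simp add: nonneg mult.left_commute[of "v$_"] mult_nonneg_nonneg)
  thus ?thesis by (simp add: lap_Lm inner_add_right)
qed

lemma sum_Lm:
  assumes sym: "\<And>i j. a i j = a j i"
  shows "(\<Sum>i\<in>UNIV. (Lm a *v v) $ i) = 0"
proof -
  have "(\<Sum>i\<in>UNIV. (Lm a *v v) $ i) = (\<Sum>i\<in>UNIV. \<Sum>j\<in>UNIV. a i j * v$i) - (\<Sum>i\<in>UNIV. \<Sum>j\<in>UNIV. a i j * v$j)"
    by (simp add: Lm_apply right_diff_distrib sum_subtractf)
  also have "(\<Sum>i\<in>UNIV. \<Sum>j\<in>UNIV. a i j * v$j) = (\<Sum>j\<in>UNIV. \<Sum>i\<in>UNIV. a i j * v$j)" by (rule sum.swap)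
  also have "\<dots> = (\<Sum>i\<in>UNIV. \<Sum>j\<in>UNIV. a i j * v$i)" using sym by simp
  finally show ?thesis by simp
qed

lemma conn_const:
  assumes sym: "\<And>i j. a i j = a j i" and nonneg: "\<And>i j. a i j \<ge> 0"
    and conn: "connected_graph a" and z: "v \<bullet> (Lm a *v v) = 0"
  shows "v$i = v$j"
proof -
  have tot: "(\<Sum>i\<in>UNIV. \<Sum>j\<in>UNIV. a i j * (v$i - v$j)^2) = 0" using quad[where a=a and v=v, OF sym] z by simp
  have each: "a p q * (v$p - v$q)^2 = 0" for p q
  proof -
    have nn: "\<And>i j. 0 \<le> a i j * (v$i - v$j)^2" by (simp add: nonneg)
    have "(\<Sum>j\<in>UNIV. a p j * (v$p - v$j)^2) = 0"
      using tot by (subst (asm) sum_nonneg_eq_0_iff) (auto intro: sum_nonneg nn)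
    thus ?thesis by (subst (asm) sum_nonneg_eq_0_iff) (auto intro: nn)
  qed
  have edge: "v$p = v$q" if "a p q > 0" for p q using each[of p q] that by simp
  have "(i, j) \<in> {(p, q). a p q > 0}\<^sup>*" using conn unfolding connected_graph_def by blast
  thus ?thesis
  proof (induction rule: rtrancl_induct)
    case base thus ?case by simp
  next
    case (step y z) thus ?case using edge by auto
  qed
qed

lemma const_sum0:
  fixes v :: "real^'n::finite"
  assumes c: "\<And>i j. v$i = v$j" and s: "(\<Sum>i\<in>UNIV. v$i) = 0"
  shows "v = 0"
proof -
  have "v$i = 0" for i
  proof -
    have "(\<Sum>j\<in>UNIV. v$j) = (\<Sum>j\<in>(UNIV::'n set). v$i)" using c by (intro sum.cong) auto
    hence "real CARD('n) * v$i = 0" using s by simp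
    thus ?thesis by simp
  qed
  thus ?thesis by (simp add: vec_eq_iff)
qed

lemma lower_bound:
  fixes a :: "'n::finite \<Rightarrow> 'n \<Rightarrow> real"
  assumes sym: "\<And>i j. a i j = a j i" and nonneg: "\<And>i j. a i j \<ge> 0"
    and conn: "connected_graph a"
  shows "\<exists>c>0. \<forall>v::real^'n. (\<Sum>i\<in>UNIV. v$i) = 0 \<longrightarrow> c * (v \<bullet> v) \<le> v \<bullet> (Lm a *v v)"
proof -
  define one :: "real^'n" where "one = (\<chi> i. 1)"
  have one: "one \<bullet> v = (\<Sum>i\<in>UNIV. v$i)" for v by (simp add: one_def inner_vec_def)
  define K where "K = sphere 0 1 \<inter> {v::real^'n. one \<bullet> v = 0}"
  have cK: "compact K" unfolding K_def by (intro compact_Int_closed compact_sphere closed_hyperplane)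
  let ?q = "\<lambda>v::real^'n. v \<bullet> (Lm a *v v)"
  have cont: "continuous_on K ?q"
    by (intro continuous_intros linear_continuous_on) (simp add: linear_conv_bounded_linear[symmetric])
  show ?thesis
  proof (cases "K = {}")
    case True
    have zz: "v = 0" if "(\<Sum>i\<in>UNIV. v$i) = 0" for v :: "real^'n"
    proof (rule ccontr)
      assume "v \<noteq> 0"
      hence "(1 / norm v) *\<^sub>R v \<in> K" using that by (simp add: K_def one sum_divide_distrib[symmetric])
      thus False using True by simp
    qed
    have "\<forall>v::real^'n. (\<Sum>i\<in>UNIV. v$i) = 0 \<longrightarrow> 1 * (v \<bullet> v) \<le> v \<bullet> (Lm a *v v)"
    proof (intro allI impI)
      fix v :: "real^'n" assume "(\<Sum>i\<in>UNIV. v$i) = 0"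
      hence "v = 0" by (rule zz)
      thus "1 * (v \<bullet> v) \<le> v \<bullet> (Lm a *v v)" by simp
    qed
    thus ?thesis by (intro exI[of _ 1]) simp
  next
    case False
    obtain v0 where v0: "v0 \<in> K" and mn: "\<And>v. v \<in> K \<Longrightarrow> ?q v0 \<le> ?q v"
      using continuous_attains_inf[OF cK False cont] by blast
    define c where "c = ?q v0"
    have "c \<noteq> 0"
    proof
      assume "c = 0"
      hence "\<And>i j. v0$i = v0$j" using conn_const[OF sym nonneg conn, of v0] c_def by simp
      moreover have "(\<Sum>i\<in>UNIV. v0$i) = 0" using v0 by (simp add: K_def one)
      ultimately have "v0 = 0" by (rule const_sum0)
      thus False using v0 by (simp add: K_def)
    qed
    moreover have "c \<ge> 0" using quad_nonneg[OF sym nonneg] c_def by simp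
    ultimately have cpos: "c > 0" by simp
    have "c * (v \<bullet> v) \<le> ?q v" if s: "(\<Sum>i\<in>UNIV. v$i) = 0" for v :: "real^'n"
    proof (cases "v = 0")
      case True thus ?thesis by simp
    next
      case False
      define w where "w = (1 / norm v) *\<^sub>R v"
      have "w \<in> K" using False s by (simp add: w_def K_def one sum_divide_distrib[symmetric])
      hence "c \<le> ?q w" using mn c_def by blast
      moreover have "?q w = ?q v / (norm v)^2"
        by (simp add: w_def matrix_vector_mult_scaleR power2_eq_square)
      moreover have "v \<bullet> v = (norm v)^2" by (simp add: dot_square_norm)
      ultimately show ?thesis using False by (simp add: le_divide_eq)
    qed
    thus ?thesis using cpos by blast
  qed
qed

lemma polar:
  fixes W :: "real^'n::finite^'n"
  assumes sW: "transpose W = W" and rho: "0 \<le> \<rho>"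
    and Padd: "\<And>u v. P u \<Longrightarrow> P v \<Longrightarrow> P (u + v)"
    and Pdiff: "\<And>u v. P u \<Longrightarrow> P v \<Longrightarrow> P (u - v)"
    and Pscale: "\<And>c v. P v \<Longrightarrow> P (c *\<^sub>R v)"
    and PW: "\<And>v. P v \<Longrightarrow> P (W *v v)"
    and bnd: "\<And>v. P v \<Longrightarrow> \<bar>v \<bullet> (W *v v)\<bar> \<le> \<rho> * (v \<bullet> v)"
    and Pv: "P v"
  shows "norm (W *v v) \<le> \<rho> * norm v"
proof (cases "v = 0 \<or> W *v v = 0")
  case True thus ?thesis using rho by auto
next
  case False
  define w where "w = W *v v"
  define s where "s = norm v / norm w"
  define z where "z = s *\<^sub>R w"
  have sp: "s > 0" using False by (simp add: s_def w_def)
  have Pz: "P z" using Pv PW Pscale by (simp add: z_def w_def)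
  have symd: "\<And>x y. x \<bullet> (W *v y) = y \<bullet> (W *v x)"
    using sym_dot[OF sW] by (simp add: inner_commute)
  have pol: "4 * (v \<bullet> (W *v z)) = (v + z) \<bullet> (W *v (v + z)) - (v - z) \<bullet> (W *v (v - z))"
    using symd[of z v]
    by (simp add: matrix_vector_right_distrib matrix_vector_mult_diff_distrib inner_add_left inner_add_right inner_diff_left inner_diff_right)
  have "(v + z) \<bullet> (W *v (v + z)) \<le> \<rho> * ((v + z) \<bullet> (v + z))"
    using bnd[OF Padd[OF Pv Pz]] by simp
  moreover have "- ((v - z) \<bullet> (W *v (v - z))) \<le> \<rho> * ((v - z) \<bullet> (v - z))"
    using bnd[OF Pdiff[OF Pv Pz]] by simp
  ultimately have "4 * (v \<bullet> (W *v z)) \<le> \<rho> * ((v + z) \<bullet> (v + z) + (v - z) \<bullet> (v - z))"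
    using pol by (simp add: algebra_simps)
  also have "(v + z) \<bullet> (v + z) + (v - z) \<bullet> (v - z) = 2 * (v \<bullet> v) + 2 * (z \<bullet> z)"
    by (simp add: inner_add_left inner_add_right inner_diff_left inner_diff_right inner_commute)
  also have "z \<bullet> z = v \<bullet> v" using False
    by (simp add: z_def s_def w_def dot_square_norm power_divide)
  finally have A: "4 * (v \<bullet> (W *v z)) \<le> 4 * \<rho> * (norm v)^2" by (simp add: dot_square_norm algebra_simps)
  have "v \<bullet> (W *v z) = z \<bullet> w" using symd[of v z] by (simp add: w_def)
  also have "\<dots> = s * (norm w)^2" by (simp add: z_def dot_square_norm)
  also have "\<dots> = norm v * norm w" using False by (simp add: s_def w_def power2_eq_square)
  finally have "norm v * norm w \<le> \<rho> * (norm v)^2" using A by simp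
  hence "norm v * norm w \<le> norm v * (\<rho> * norm v)" by (simp add: power2_eq_square algebra_simps)
  thus ?thesis using False by (simp add: w_def)
qed

lemma contraction:
  fixes a :: "'n::finite \<Rightarrow> 'n \<Rightarrow> real"
  assumes sym: "\<And>i j. a i j = a j i" and nonneg: "\<And>i j. a i j \<ge> 0"
    and conn: "connected_graph a" and h_pos: "0 < h"
    and lam: "\<And>v. v \<bullet> (Lm a *v v) \<le> lam * (v \<bullet> v)" and hl: "h * lam < 2"
  shows "\<exists>\<rho>. 0 \<le> \<rho> \<and> \<rho> < 1 \<and> (\<forall>v::real^'n. (\<Sum>i\<in>UNIV. v$i) = 0 \<longrightarrow>
            norm ((mat 1 - h *\<^sub>R Lm a) *v v) \<le> \<rho> * norm v)"
proof -
  obtain c where cpos: "c > 0" and cb: "\<And>v::real^'n. (\<Sum>i\<in>UNIV. v$i) = 0 \<Longrightarrow> c * (v \<bullet> v) \<le> v \<bullet> (Lm a *v v)"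
    using lower_bound[OF sym nonneg conn] by blast
  define \<rho> where "\<rho> = max (max (h*lam - 1) (1 - h*c)) 0"
  have r0: "0 \<le> \<rho>" and r1: "\<rho> < 1" using hl h_pos cpos by (auto simp: \<rho>_def)
  define W where "W = mat 1 - h *\<^sub>R Lm a"
  have Wv: "W *v v = v - h *\<^sub>R (Lm a *v v)" for v
    by (simp add: W_def matrix_vector_mult_diff_rdistrib scaleR_matrix_vector_assoc[symmetric])
  have Ls: "Lm a $ j $ i = Lm a $ i $ j" for i j
    using Lm_sym[of a, OF sym] by (metis transpose_def vec_lambda_beta)
  have sW: "transpose W = W" by (simp add: W_def transpose_def vec_eq_iff mat_def Ls)
  let ?P = "\<lambda>v::real^'n. (\<Sum>i\<in>UNIV. v$i) = 0"
  have PW: "?P (W *v v)" if "?P v" for v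
    using that sum_Lm[where a=a and v=v, OF sym] by (simp add: Wv sum_subtractf sum_distrib_left[symmetric])
  have bnd: "\<bar>v \<bullet> (W *v v)\<bar> \<le> \<rho> * (v \<bullet> v)" if Pv: "?P v" for v
  proof -
    have vv: "0 \<le> v \<bullet> v" by simp
    have e: "v \<bullet> (W *v v) = v \<bullet> v - h * (v \<bullet> (Lm a *v v))" by (simp add: Wv inner_diff_right)
    have lo: "h * (c * (v \<bullet> v)) \<le> h * (v \<bullet> (Lm a *v v))" using cb[OF Pv] h_pos by simp
    have hi: "h * (v \<bullet> (Lm a *v v)) \<le> h * (lam * (v \<bullet> v))" using lam[of v] h_pos by simp
    have "(1 - h*c) * (v \<bullet> v) \<le> \<rho> * (v \<bullet> v)" by (rule mult_right_mono) (auto simp: \<rho>_def vv)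
    moreover have "(h*lam - 1) * (v \<bullet> v) \<le> \<rho> * (v \<bullet> v)" by (rule mult_right_mono) (auto simp: \<rho>_def vv)
    ultimately show ?thesis using e lo hi by (simp add: abs_le_iff algebra_simps)
  qed
  have "norm (W *v v) \<le> \<rho> * norm v" if "?P v" for v
    by (rule polar[OF sW r0, where P="?P"])
       (auto simp: sum.distrib sum_subtractf sum_distrib_left[symmetric] PW bnd that)
  thus ?thesis using r0 r1 unfolding W_def by blast
qed


lemma seq_contract:
  fixes e :: "nat \<Rightarrow> real"
  assumes r0: "0 \<le> \<rho>" and r1: "\<rho> < 1" and e0: "\<And>t. 0 \<le> e t"
    and st: "\<And>t. e (Suc t) \<le> \<rho> * e t + r t" and rl: "r \<longlonglongrightarrow> 0"
  shows "e \<longlonglongrightarrow> 0"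
proof (rule LIMSEQ_I)
  fix \<epsilon> :: real assume ep: "0 < \<epsilon>"
  define \<delta> where "\<delta> = \<epsilon> * (1 - \<rho>) / 4"
  have dp: "\<delta> > 0" using ep r1 by (simp add: \<delta>_def)
  obtain N where N: "\<And>t. t \<ge> N \<Longrightarrow> norm (r t - 0) < \<delta>" using LIMSEQ_D[OF rl dp] by blast
  have ind: "e (N + k) \<le> \<rho>^k * e N + \<delta> / (1 - \<rho>)" for k
  proof (induction k)
    case 0 thus ?case using dp r1 by simp
  next
    case (Suc k)
    have "e (N + Suc k) \<le> \<rho> * e (N + k) + r (N + k)" using st[of "N+k"] by simp
    also have "\<dots> \<le> \<rho> * (\<rho>^k * e N + \<delta> / (1 - \<rho>)) + \<delta>"
      using N[of "N+k"] Suc.IH r0 by (intro add_mono mult_left_mono) auto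
    also have "\<dots> = \<rho>^Suc k * e N + \<delta> / (1 - \<rho>)" using r1 by (simp add: field_simps)
    finally show ?case .
  qed
  have "(\<lambda>k. \<rho>^k) \<longlonglongrightarrow> 0" using r0 r1 by (intro LIMSEQ_power_zero) simp
  hence "(\<lambda>k. \<rho>^k * e N) \<longlonglongrightarrow> 0 * e N" by (rule tendsto_mult_right)
  hence "(\<lambda>k. \<rho>^k * e N) \<longlonglongrightarrow> 0" by simp
  moreover have "0 < \<epsilon>/2" using ep by simp
  ultimately have "\<exists>K. \<forall>k\<ge>K. norm (\<rho>^k * e N - 0) < \<epsilon>/2" by (rule LIMSEQ_D)
  then obtain K where K: "\<And>k. k \<ge> K \<Longrightarrow> \<rho>^k * e N < \<epsilon>/2" by force
  have ne: "1 - \<rho> \<noteq> 0" using r1 by simp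
  have dd: "\<delta> / (1 - \<rho>) = \<epsilon>/4" unfolding \<delta>_def using ne by (simp add: divide_simps)
  show "\<exists>no. \<forall>n\<ge>no. norm (e n - 0) < \<epsilon>"
  proof (intro exI allI impI)
    fix n assume "N + K \<le> n"
    define k where "k = n - N"
    have k: "n = N + k" "k \<ge> K" using \<open>N + K \<le> n\<close> by (auto simp: k_def)
    have "e n < \<epsilon>" using ind[of k] K[OF k(2)] dd ep k(1) by simp
    thus "norm (e n - 0) < \<epsilon>" using e0[of n] by simp
  qed
qed



theorem proposition3:
  fixes a :: "'n::finite \<Rightarrow> 'n \<Rightarrow> real"
    and h :: real
    and g :: "'n \<Rightarrow> 'a::euclidean_space \<Rightarrow> real"
    and dg :: "'n \<Rightarrow> 'a \<Rightarrow> 'a"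
    and X :: "'n \<Rightarrow> 'a set"
    and \<alpha> \<beta> :: "nat \<Rightarrow> real"
    and x :: "nat \<Rightarrow> 'n \<Rightarrow> 'a"
    and y \<xi> grd \<phi>' \<phi> u :: "nat \<Rightarrow> 'n \<Rightarrow> 'a"
  assumes sym: "\<And>i j. a i j = a j i"
    and nonneg: "\<And>i j. a i j \<ge> 0"
    and conn: "connected_graph a"
    and h_pos: "0 < h"
    and h_bound: "h < 2 / largest_eigenvalue (laplacian a)"
    and g_convex: "\<And>i. convex_on UNIV (g i)"
    and g_cont: "\<And>i. continuous_on UNIV (g i)"
    and dg_sub: "\<And>i z. is_subgradient (pos_part (g i)) z (dg i z)"
    and X_closed: "\<And>i. closed (X i)"
    and X_convex: "\<And>i. convex (X i)"
    and X_ne: "\<And>i. X i \<noteq> {}"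
    and y_def: "\<And>t i. y t i = x t i + h *\<^sub>R (\<Sum>j\<in>neighbors a i. a i j *\<^sub>R (x t j - x t i))"
    and grd_def: "\<And>t i. grd t i = \<beta> t *\<^sub>R dg i (y t i)"
    and \<xi>_def: "\<And>t i. \<xi> t i = y t i - grd t i"
    and \<phi>'_def: "\<And>t i. \<phi>' t i = \<alpha> t *\<^sub>R (\<xi> t i - closest_point (X i) (\<xi> t i))"
    and \<phi>_def: "\<And>t i. \<phi> t i = - grd t i - \<phi>' t i"
    and u_def: "\<And>t i. u t i = h *\<^sub>R (\<Sum>j\<in>neighbors a i. a i j *\<^sub>R (x t j - x t i)) + \<phi> t i"
    and step: "\<And>t i. x (Suc t) i = x t i + u t i"
    and \<phi>_lim: "\<And>i. ((\<lambda>t. \<phi> t i) \<longlongrightarrow> 0) sequentially"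
  shows "\<forall>i j. ((\<lambda>t. norm (x t i - x t j)) \<longlongrightarrow> 0) sequentially"
proof -
  define lamb where "lamb = largest_eigenvalue (laplacian a)"
  have Lsy: "laplacian a $ j $ i = laplacian a $ i $ j" for i j
    by (cases "i = j") (simp_all add: laplacian_def sym[of j i])
  have symL: "transpose (laplacian a) = laplacian a"
    by (simp add: transpose_def vec_eq_iff Lsy)
  have lpos: "lamb > 0"
  proof (rule ccontr)
    assume "\<not> lamb > 0"
    hence "2 / lamb \<le> 0" by (simp add: divide_nonneg_nonpos)
    thus False using h_bound h_pos unfolding lamb_def[symmetric] by linarith
  qed
  have hl: "h * lamb < 2" using h_bound lpos lamb_def by (simp add: less_divide_eq)
  have lamv: "v \<bullet> (Lm a *v v) \<le> lamb * (v \<bullet> v)" for v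
    using Lm_le_lap[of a v, OF nonneg] rayleigh[OF symL, of v] lamb_def by simp
  obtain \<rho> where r0: "0 \<le> \<rho>" and r1: "\<rho> < 1"
    and contr: "\<And>v::real^'n. (\<Sum>i\<in>UNIV. v$i) = 0 \<Longrightarrow> norm ((mat 1 - h *\<^sub>R Lm a) *v v) \<le> \<rho> * norm v"
    using contraction[OF sym nonneg conn h_pos lamv hl] by blast
  define W where "W = mat 1 - h *\<^sub>R Lm a"
  have Wv: "W *v v = v - h *\<^sub>R (Lm a *v v)" for v
    by (simp add: W_def matrix_vector_mult_diff_rdistrib scaleR_matrix_vector_assoc[symmetric])
  define one :: "real^'n" where "one = (\<chi> i. 1)"
  have Lone: "Lm a *v one = 0" by (simp add: vec_eq_iff Lm_apply one_def)
  have Wone: "W *v one = one" by (simp add: Wv Lone)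
  have sumW: "(\<Sum>i\<in>UNIV. (W *v v)$i) = (\<Sum>i\<in>UNIV. v$i)" for v
    using sum_Lm[where a=a and v=v, OF sym] by (simp add: Wv sum_subtractf sum_distrib_left[symmetric])
  define Pr where "Pr v = v - ((\<Sum>j\<in>UNIV. v$j) / real CARD('n)) *\<^sub>R one" for v :: "real^'n"
  have sumPr: "(\<Sum>i\<in>UNIV. (Pr v)$i) = 0" for v
    by (simp add: Pr_def one_def sum_subtractf)
  have PrW: "Pr (W *v v + p) = W *v (Pr v) + Pr p" for v p
  proof -
    have "W *v (Pr v) = W *v v - ((\<Sum>j\<in>UNIV. v$j) / real CARD('n)) *\<^sub>R one"
      by (simp only: Pr_def matrix_vector_mult_diff_distrib matrix_vector_mult_scaleR Wone)
    moreover have "(\<Sum>j\<in>UNIV. (W *v v + p)$j) = (\<Sum>j\<in>UNIV. v$j) + (\<Sum>j\<in>UNIV. p$j)"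
      using sumW[of v] by (simp add: sum.distrib)
    ultimately show ?thesis by (simp add: Pr_def add_divide_distrib scaleR_add_left algebra_simps Wone)
  qed
  have comp: "((\<lambda>t. (x t i - x t j) \<bullet> b) \<longlongrightarrow> 0) sequentially" if b: "b \<in> Basis" for i j b
  proof -
    define z where "z t = (\<chi> k. x t k \<bullet> b)" for t
    define p where "p t = (\<chi> k. \<phi> t k \<bullet> b)" for t
    have nb: "(\<Sum>j\<in>neighbors a k. a k j * (z t $ j - z t $ k)) = (\<Sum>j\<in>UNIV. a k j * (z t $ j - z t $ k))" for t k
    proof (rule sum.mono_neutral_left)
      show "\<forall>j\<in>UNIV - neighbors a k. a k j * (z t $ j - z t $ k) = 0"
      proof
        fix j assume "j \<in> UNIV - neighbors a k"
        hence "j = k \<or> a k j = 0" using nonneg[of k j] by (auto simp: neighbors_def)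
        thus "a k j * (z t $ j - z t $ k) = 0" by auto
      qed
    qed auto
    have zstep: "z (Suc t) = W *v z t + p t" for t
    proof -
      have "z (Suc t) $ k = (W *v z t + p t) $ k" for k
      proof -
        have "z (Suc t) $ k = z t $ k + h * (\<Sum>j\<in>neighbors a k. a k j * (z t $ j - z t $ k)) + p t $ k"
          by (simp add: z_def p_def step u_def inner_add_left inner_sum_left inner_diff_left)
        also have "\<dots> = z t $ k + h * (\<Sum>j\<in>UNIV. a k j * (z t $ j - z t $ k)) + p t $ k"
          by (simp only: nb)
        also have "(\<Sum>j\<in>UNIV. a k j * (z t $ j - z t $ k)) = - (Lm a *v z t) $ k"
          by (simp add: Lm_apply sum_negf[symmetric] algebra_simps)
        also have "z t $ k + h * (- (Lm a *v z t) $ k) + p t $ k = z t $ k - h * (Lm a *v z t) $ k + p t $ k"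
          by simp
        finally show ?thesis by (simp add: Wv)
      qed
      thus ?thesis by (simp add: vec_eq_iff)
    qed
    define e where "e t = Pr (z t)" for t
    have est: "norm (e (Suc t)) \<le> \<rho> * norm (e t) + norm (Pr (p t))" for t
    proof -
      have "e (Suc t) = W *v e t + Pr (p t)" by (simp add: e_def zstep PrW)
      hence "norm (e (Suc t)) \<le> norm (W *v e t) + norm (Pr (p t))" by (simp add: norm_triangle_ineq)
      moreover have "norm (W *v e t) \<le> \<rho> * norm (e t)" unfolding W_def e_def by (rule contr[OF sumPr])
      ultimately show ?thesis by simp
    qed
    have pl: "(p \<longlongrightarrow> 0) sequentially"
    proof (rule vec_tendstoI)
      fix k
      have "((\<lambda>t. \<phi> t k \<bullet> b) \<longlongrightarrow> 0 \<bullet> b) sequentially"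
        by (intro tendsto_inner \<phi>_lim tendsto_const)
      thus "((\<lambda>t. p t $ k) \<longlongrightarrow> 0 $ k) sequentially" by (simp add: p_def)
    qed
    have "((\<lambda>t. Pr (p t)) \<longlongrightarrow> Pr 0) sequentially"
      unfolding Pr_def by (intro tendsto_intros pl) simp
    hence prl: "((\<lambda>t. norm (Pr (p t))) \<longlongrightarrow> 0) sequentially"
      by (simp add: Pr_def tendsto_norm_zero_iff)
    have "((\<lambda>t. norm (e t)) \<longlongrightarrow> 0) sequentially"
      by (rule seq_contract[OF r0 r1 _ est prl]) simp
    hence el: "(e \<longlongrightarrow> 0) sequentially" by (simp add: tendsto_norm_zero_iff)
    have "((\<lambda>t. e t $ i - e t $ j) \<longlongrightarrow> 0 $ i - 0 $ j) sequentially"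
      by (intro tendsto_intros el)
    moreover have "e t $ i - e t $ j = (x t i - x t j) \<bullet> b" for t
      by (simp add: e_def Pr_def z_def one_def inner_diff_left)
    ultimately show ?thesis by simp
  qed
  show ?thesis
  proof (intro allI)
    fix i j
    have "((\<lambda>t. \<Sum>b\<in>Basis. \<bar>(x t i - x t j) \<bullet> b\<bar>) \<longlongrightarrow> 0) sequentially"
    proof -
      have "((\<lambda>t. \<Sum>b\<in>Basis. \<bar>(x t i - x t j) \<bullet> b\<bar>) \<longlongrightarrow> (\<Sum>b\<in>(Basis::'a set). 0)) sequentially"
        by (intro tendsto_sum tendsto_rabs_zero comp)
      thus ?thesis by simp
    qed
    hence "((\<lambda>t. x t i - x t j) \<longlongrightarrow> 0) sequentially"
      by (rule Lim_null_comparison[rotated]) (simp add: norm_le_l1)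
    thus "((\<lambda>t. norm (x t i - x t j)) \<longlongrightarrow> 0) sequentially" by (simp add: tendsto_norm_zero_iff)
  qed
qed

end
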